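(* Let $n\ge2$, $m\ge1$, $0<\alpha_1\le\dots\le\alpha_m$ with $\sum\alpha_j=1$, and let $(A,\tau)=(\mathbb{C}p_1\oplus\cdots\oplus\mathbb{C}p_m,\tau_1)*(\mathbb{M}_n,tr_n)$ be the reduced free product ($\tau_1(p_j)=\alpha_j$). Let $\{e_{ij}\}$ be matrix units of $\mathbb{M}_n\subset A$ and $u=\sum_{i=1}^{n-1}e_{i,i+1}+e_{n,1}$. Let $l$ be an integer with $l\mid n$, $1<l<n$ (for part (ii)). Then: (i) The family consisting of the $n+1$ subalgebras $C^*(u^kp_1u^{-k},\dots,u^kp_mu^{-k})$, $k=0,\dots,n-1$, and $C^*(e_{11},\dots,e_{nn})$ is free in $(A,\tau)$. More generally, if $\omega\in\Lambda^\circ\big(C^*(p_1,\dots,p_m)^\circ,\dots,C^*(u^{n-1}p_1u^{1-n},\dots,u^{n-1}p_mu^{1-n})^\circ,C^*(e_{11},\dots,e_{nn})^\circ\big)$, then $\tau(\omega u^r)=0$ for all $0\le r\le n-1$. (ii) The family consisting of the $l+1$ subalgebras $C^*(u^kp_1u^{-k},\dots,u^kp_mu^{-k})$, $k=0,\dots,l-1$, and $C^*(e_{11},\dots,e_{nn},u^l,u^{2l},\dots,u^{n-l})$ is free in $(A,\tau)$. More generally, if $\omega\in\Lambda^\circ\big(C^*(p_1,\dots,p_m)^\circ,\dots,C^*(u^{l-1}p_1u^{1-l},\dots,u^{l-1}p_mu^{1-l})^\circ,C^*(e_{11},\dots,e_{nn},u^l,\dots,u^{n-l})^\circ\big)$,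 then $\tau(\omega u^r)=0$ for all $0\le r\le l-1$.
   Context: Reduced free product: the unique unital $C^*$-algebra with state generated by unital copies of the factors, restricting to the given traces, in which they are free, with faithful GNS representation; here $\tau$ is a faithful trace. A family of unital $C^*$-subalgebras $D_i$ is free in $(A,\tau)$ if $\tau(d_1\cdots d_r)=0$ whenever $d_s\in D_{i_s}$, $i_1\ne i_2\ne\dots\ne i_r$, and $\tau(d_s)=0$ for all $s$. For a unital subalgebra $D$, $D^\circ=\{d\in D:\tau(d)=0\}$. For unital subalgebras $D_1,\dots,D_k$, $\Lambda^\circ(D_1^\circ,\dots,D_k^\circ)$ is the set of all products $d_1d_2\cdots d_j$ of nonzero length with $d_t\in D_{i_t}^\circ$ and $i_t\ne i_{t+1}$ for $1\le t\le j-1$. *)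

theory Defs
  imports "HOL-Analysis.Analysis"
begin

text \<open>Unital complex C*-algebras, given abstractly on a real unital Banach algebra
  'a by a complex scalar multiplication sc and an involution st.\<close>

definition cstar_algebra :: "(complex \<Rightarrow> 'a::{real_normed_algebra_1,banach} \<Rightarrow> 'a) \<Rightarrow> ('a \<Rightarrow> 'a) \<Rightarrow> bool" where
  "cstar_algebra sc st \<longleftrightarrow>
     (\<forall>(r::real) x::'a. sc (complex_of_real r) x = scaleR r x) \<and>
     (\<forall>a b x. sc (a + b) x = sc a x + sc b x) \<and>
     (\<forall>a x y. sc a (x + y) = sc a x + sc a y) \<and>
     (\<forall>a b x. sc (a * b) x = sc a (sc b x)) \<and>
     (\<forall>a x y. sc a (x * y) = sc a x * y) \<and>
     (\<forall>a x y. sc a (x * y) = x * sc a y) \<and>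
     (\<forall>a x. norm (sc a x) = cmod a * norm x) \<and>
     (\<forall>x y. st (x + y) = st x + st y) \<and>
     (\<forall>x y. st (x * y) = st y * st x) \<and>
     (\<forall>a x. st (sc a x) = sc (cnj a) (st x)) \<and>
     (\<forall>x. st (st x) = x) \<and>
     (\<forall>x. norm (st x * x) = (norm x)\<^sup>2)"

definition faithful_tracial_state ::
  "(complex \<Rightarrow> 'a \<Rightarrow> 'a) \<Rightarrow> ('a \<Rightarrow> 'a) \<Rightarrow> ('a::ring_1 \<Rightarrow> complex) \<Rightarrow> bool" where
  "faithful_tracial_state sc st \<tau> \<longleftrightarrow>
     (\<forall>x y. \<tau> (x + y) = \<tau> x + \<tau> y) \<and>
     (\<forall>a x. \<tau> (sc a x) = a * \<tau> x) \<and>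
     \<tau> 1 = 1 \<and>
     (\<forall>x. Im (\<tau> (st x * x)) = 0 \<and> Re (\<tau> (st x * x)) \<ge> 0) \<and>
     (\<forall>x. \<tau> (st x * x) = 0 \<longrightarrow> x = 0) \<and>
     (\<forall>x y. \<tau> (x * y) = \<tau> (y * x))"

definition cstar_gen ::
  "(complex \<Rightarrow> 'a \<Rightarrow> 'a) \<Rightarrow> ('a \<Rightarrow> 'a) \<Rightarrow> 'a::real_normed_algebra_1 set \<Rightarrow> 'a set" where
  "cstar_gen sc st S = \<Inter>{B. S \<subseteq> B \<and> 1 \<in> B \<and> closed B \<and>
       (\<forall>x\<in>B. \<forall>y\<in>B. x + y \<in> B \<and> x * y \<in> B) \<and>
       (\<forall>a. \<forall>x\<in>B. sc a x \<in> B) \<and> (\<forall>x\<in>B. st x \<in> B)}"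

definition free_family :: "('a::monoid_mult \<Rightarrow> complex) \<Rightarrow> 'i set \<Rightarrow> ('i \<Rightarrow> 'a set) \<Rightarrow> bool" where
  "free_family \<tau> I D \<longleftrightarrow>
     (\<forall>(r::nat) (idx::nat \<Rightarrow> 'i) (d::nat \<Rightarrow> 'a).
        r \<ge> 1 \<and> (\<forall>s<r. idx s \<in> I \<and> d s \<in> D (idx s) \<and> \<tau> (d s) = 0) \<and>
        (\<forall>s. s + 1 < r \<longrightarrow> idx s \<noteq> idx (s + 1))
        \<longrightarrow> \<tau> (prod_list (map d [0..<r])) = 0)"

definition Lambda0 :: "('a::monoid_mult \<Rightarrow> complex) \<Rightarrow> 'i set \<Rightarrow> ('i \<Rightarrow> 'a set) \<Rightarrow> 'a set" where
  "Lambda0 \<tau> I D = {prod_list (map d [0..<r]) | r (idx::nat \<Rightarrow> 'i) d.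
        r \<ge> 1 \<and> (\<forall>s<r. idx s \<in> I \<and> d s \<in> D (idx s) \<and> \<tau> (d s) = 0) \<and>
        (\<forall>s. s + 1 < r \<longrightarrow> idx s \<noteq> idx (s + 1))}"

end

theory Submission
  imports Defs
begin

definition goodB :: "(complex \<Rightarrow> 'a \<Rightarrow> 'a) \<Rightarrow> ('a \<Rightarrow> 'a) \<Rightarrow> 'a::real_normed_algebra_1 set \<Rightarrow> bool" where
  "goodB sc st B \<longleftrightarrow> 1 \<in> B \<and> closed B \<and>
       (\<forall>x\<in>B. \<forall>y\<in>B. x + y \<in> B \<and> x * y \<in> B) \<and>
       (\<forall>a. \<forall>x\<in>B. sc a x \<in> B) \<and> (\<forall>x\<in>B. st x \<in> B)"

lemma cg_eq: "cstar_gen sc st S = \<Inter>{B. S \<subseteq> B \<and> goodB sc st B}"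
  unfolding cstar_gen_def goodB_def by (rule arg_cong[where f=Inter]) blast

lemma cg_sub: "S \<subseteq> cstar_gen sc st S"
  unfolding cg_eq by blast

lemma cg_min: "S \<subseteq> B \<Longrightarrow> goodB sc st B \<Longrightarrow> cstar_gen sc st S \<subseteq> B"
  unfolding cg_eq by blast

lemma cg_good: "goodB sc st (cstar_gen sc st S)"
  unfolding goodB_def cg_eq by (auto intro!: closed_Inter simp: goodB_def)

lemma cg_one: "1 \<in> cstar_gen sc st S" using cg_good unfolding goodB_def by blast
lemma cg_add: "x \<in> cstar_gen sc st S \<Longrightarrow> y \<in> cstar_gen sc st S \<Longrightarrow> x + y \<in> cstar_gen sc st S"
  using cg_good unfolding goodB_def by blast
lemma cg_mult: "x \<in> cstar_gen sc st S \<Longrightarrow> y \<in> cstar_gen sc st S \<Longrightarrow> x * y \<in> cstar_gen sc st S"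
  using cg_good unfolding goodB_def by blast
lemma cg_sc: "x \<in> cstar_gen sc st S \<Longrightarrow> sc a x \<in> cstar_gen sc st S"
  using cg_good unfolding goodB_def by blast
lemma cg_st: "x \<in> cstar_gen sc st S \<Longrightarrow> st x \<in> cstar_gen sc st S"
  using cg_good unfolding goodB_def by blast
lemma cg_pow: "x \<in> cstar_gen sc st S \<Longrightarrow> x ^ k \<in> cstar_gen sc st S"
  by (induction k) (auto intro: cg_one cg_mult)
lemma cg_mono: "S \<subseteq> cstar_gen sc st T \<Longrightarrow> cstar_gen sc st S \<subseteq> cstar_gen sc st T"
  by (rule cg_min) (auto intro: cg_good)

locale cst =
  fixes sc :: "complex \<Rightarrow> 'a::{real_normed_algebra_1,banach} \<Rightarrow> 'a"
    and st :: "'a \<Rightarrow> 'a"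
  assumes cstar: "cstar_algebra sc st"
begin

lemma sc_real: "sc (complex_of_real r) x = scaleR r x" using cstar unfolding cstar_algebra_def by meson
lemma sc_add_l: "sc (a + b) x = sc a x + sc b x" using cstar unfolding cstar_algebra_def by meson
lemma sc_add_r: "sc a (x + y) = sc a x + sc a y" using cstar unfolding cstar_algebra_def by meson
lemma sc_mult: "sc (a * b) x = sc a (sc b x)" using cstar unfolding cstar_algebra_def by meson
lemma sc_ml: "sc a (x * y) = sc a x * y" using cstar unfolding cstar_algebra_def by meson
lemma sc_mr: "sc a (x * y) = x * sc a y" using cstar unfolding cstar_algebra_def by meson
lemma st_add: "st (x + y) = st x + st y" using cstar unfolding cstar_algebra_def by meson
lemma st_mult: "st (x * y) = st y * st x" using cstar unfolding cstar_algebra_def by meson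
lemma st_sc: "st (sc a x) = sc (cnj a) (st x)" using cstar unfolding cstar_algebra_def by meson
lemma st_st[simp]: "st (st x) = x" using cstar unfolding cstar_algebra_def by meson

lemma sc_0[simp]: "sc 0 x = 0" using sc_real[of 0 x] by simp
lemma sc_1[simp]: "sc 1 x = x" using sc_real[of 1 x] by simp
lemma sc_zero[simp]: "sc a 0 = 0" using sc_add_r[of a 0 0] by simp
lemma sc_sum: "sc a (sum f A) = (\<Sum>i\<in>A. sc a (f i))"
  by (induction A rule: infinite_finite_induct) (auto simp: sc_add_r)
lemma sc_sum_l: "sc (sum f A) x = (\<Sum>i\<in>A. sc (f i) x)"
  by (induction A rule: infinite_finite_induct) (auto simp: sc_add_l)
lemma st_zero[simp]: "st 0 = 0" using st_add[of 0 0] by simp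
lemma st_one[simp]: "st 1 = 1"
proof -
  have "st 1 = st 1 * st (st 1)" by simp
  also have "\<dots> = st (st 1 * 1)" by (rule st_mult[symmetric])
  finally show ?thesis by simp
qed
lemma st_sum: "st (sum f A) = (\<Sum>i\<in>A. st (f i))"
  by (induction A rule: infinite_finite_induct) (auto simp: st_add)
lemma st_pow: "st (x ^ k) = (st x) ^ k"
  by (induction k) (auto simp: st_mult power_commutes)

end


lemma (in cst) sc_prod: "sc a x * sc b y = sc (a * b) (x * y)"
proof -
  have "sc a x * sc b y = sc a (x * sc b y)" by (simp add: sc_ml)
  also have "\<dots> = sc a (sc b (x * y))" by (simp add: sc_mr)
  finally show ?thesis by (simp add: sc_mult)
qed

locale ctx = cst sc st for sc :: "complex \<Rightarrow> 'a::{real_normed_algebra_1,banach} \<Rightarrow> 'a" and st +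
  fixes \<tau> :: "'a \<Rightarrow> complex" and n :: nat and e :: "nat \<Rightarrow> nat \<Rightarrow> 'a" and u :: 'a
  assumes state: "faithful_tracial_state sc st \<tau>"
    and n2: "n \<ge> 2"
    and e_mult: "\<forall>i\<in>{1..n}. \<forall>j\<in>{1..n}. \<forall>k\<in>{1..n}. \<forall>l\<in>{1..n}.
                   e i j * e k l = (if j = k then e i l else 0)"
    and e_star: "\<forall>i\<in>{1..n}. \<forall>j\<in>{1..n}. st (e i j) = e j i"
    and e_sum: "(\<Sum>i=1..n. e i i) = 1"
    and u_def: "u = (\<Sum>i=1..n-1. e i (i+1)) + e n 1"
begin

lemma tr_add: "\<tau> (x + y) = \<tau> x + \<tau> y" using state unfolding faithful_tracial_state_def by meson
lemma tr_sc: "\<tau> (sc a x) = a * \<tau> x" using state unfolding faithful_tracial_state_def by meson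
lemma tr_one: "\<tau> 1 = 1" using state unfolding faithful_tracial_state_def by meson
lemma tr_comm: "\<tau> (x * y) = \<tau> (y * x)" using state unfolding faithful_tracial_state_def by meson
lemma tr_zero: "\<tau> 0 = 0" using tr_add[of 0 0] by simp

definition mat :: "(nat \<Rightarrow> nat \<Rightarrow> complex) \<Rightarrow> 'a" where
  "mat a = (\<Sum>i\<in>{1..n}. \<Sum>j\<in>{1..n}. sc (a i j) (e i j))"

lemma mat_cong: "(\<And>i j. i \<in> {1..n} \<Longrightarrow> j \<in> {1..n} \<Longrightarrow> a i j = b i j) \<Longrightarrow> mat a = mat b"
  unfolding mat_def by (intro sum.cong refl) auto

lemma sum_if_const: "(\<Sum>l\<in>A. if P then f l else 0) = (if P then sum f A else 0)"
  by simp

lemma mat_mult: "mat a * mat b = mat (\<lambda>i k. \<Sum>j\<in>{1..n}. a i j * b j k)"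
proof -
  let ?N = "{1..n}"
  have pt: "sc (a i j) (e i j) * sc (b k l) (e k l) = (if k = j then sc (a i j * b k l) (e i l) else 0)"
    if "i \<in> ?N" "j \<in> ?N" "k \<in> ?N" "l \<in> ?N" for i j k l
    using e_mult that by (auto simp: sc_prod)
  have "mat a * mat b = (\<Sum>i\<in>?N. \<Sum>j\<in>?N. \<Sum>k\<in>?N. \<Sum>l\<in>?N. sc (a i j) (e i j) * sc (b k l) (e k l))"
    unfolding mat_def by (simp only: sum_distrib_right, simp only: sum_distrib_left)
  also have "\<dots> = (\<Sum>i\<in>?N. \<Sum>j\<in>?N. \<Sum>k\<in>?N. \<Sum>l\<in>?N. if k = j then sc (a i j * b k l) (e i l) else 0)"
    by (intro sum.cong refl) (simp add: pt)
  also have "\<dots> = (\<Sum>i\<in>?N. \<Sum>j\<in>?N. \<Sum>k\<in>?N. if k = j then (\<Sum>l\<in>?N. sc (a i j * b k l) (e i l)) else 0)"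
    by (simp only: sum_if_const)
  also have "\<dots> = (\<Sum>i\<in>?N. \<Sum>j\<in>?N. \<Sum>l\<in>?N. sc (a i j * b j l) (e i l))"
    by (rule sum.cong[OF refl], rule sum.cong[OF refl], simp add: sum.delta)
  also have "\<dots> = (\<Sum>i\<in>?N. \<Sum>l\<in>?N. \<Sum>j\<in>?N. sc (a i j * b j l) (e i l))"
    by (rule sum.cong[OF refl], rule sum.swap)
  also have "\<dots> = mat (\<lambda>i k. \<Sum>j\<in>{1..n}. a i j * b j k)"
    unfolding mat_def by (simp add: sc_sum_l)
  finally show ?thesis .
qed

lemma mat_st: "st (mat a) = mat (\<lambda>i j. cnj (a j i))"
proof -
  let ?N = "{1..n}"
  have "st (mat a) = (\<Sum>i\<in>?N. \<Sum>j\<in>?N. sc (cnj (a i j)) (e j i))"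
    unfolding mat_def using e_star by (simp add: st_sum st_sc)
  also have "\<dots> = mat (\<lambda>i j. cnj (a j i))"
    unfolding mat_def by (rule sum.swap)
  finally show ?thesis .
qed

lemma mat_sc: "sc c (mat a) = mat (\<lambda>i j. c * a i j)"
  unfolding mat_def by (simp add: sc_sum sc_mult)

lemma mat_delta:
  assumes "\<And>i. i \<in> {1..n} \<Longrightarrow> g i \<in> {1..n}"
  shows "mat (\<lambda>i j. if j = g i then c i else 0) = (\<Sum>i\<in>{1..n}. sc (c i) (e i (g i)))"
  unfolding mat_def
proof (intro sum.cong refl)
  fix i assume "i \<in> {1..n}"
  then show "(\<Sum>j\<in>{1..n}. sc (if j = g i then c i else 0) (e i j)) = sc (c i) (e i (g i))"
  proof -
    have "(\<Sum>j\<in>{1..n}. sc (if j = g i then c i else 0) (e i j)) = (\<Sum>j\<in>{1..n}. if j = g i then sc (c i) (e i j) else 0)"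
      by (intro sum.cong refl) simp
    also have "\<dots> = sc (c i) (e i (g i))" using assms \<open>i \<in> {1..n}\<close> by (simp add: sum.delta)
    finally show ?thesis .
  qed
qed

lemma mat_one: "mat (\<lambda>i j. if i = j then 1 else 0) = 1"
proof -
  have "mat (\<lambda>i j. if i = j then 1 else 0) = mat (\<lambda>i j. if j = i then 1 else 0)"
    by (rule mat_cong) auto
  also have "\<dots> = (\<Sum>i\<in>{1..n}. sc 1 (e i i))" by (rule mat_delta) auto
  finally show ?thesis using e_sum by simp
qed

lemma sc_if: "sc (if P then a else b) x = (if P then sc a x else sc b x)" by simp

lemma e_mat: assumes "k \<in> {1..n}" "l \<in> {1..n}" shows "e k l = mat (\<lambda>i j. if i = k \<and> j = l then 1 else 0)"
proof -
  have "mat (\<lambda>i j. if i = k \<and> j = l then 1 else 0) = (\<Sum>i\<in>{1..n}. if i = k then (\<Sum>j\<in>{1..n}. if j = l then e i j else 0) else 0)"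
    unfolding mat_def
    apply (rule sum.cong[OF refl], subst sum_if_const[symmetric], rule sum.cong[OF refl])
    by (simp add: sc_if)
  also have "\<dots> = e k l" using assms by (simp add: sum.delta)
  finally show ?thesis by simp
qed

definition sig :: "nat \<Rightarrow> nat" where "sig i = (if i < n then i + 1 else 1)"

lemma sig_in: "i \<in> {1..n} \<Longrightarrow> sig i \<in> {1..n}" using n2 by (auto simp: sig_def)

lemma u_mat: "u = mat (\<lambda>i j. if j = sig i then 1 else 0)"
proof -
  have "mat (\<lambda>i j. if j = sig i then 1 else 0) = (\<Sum>i\<in>{1..n}. sc 1 (e i (sig i)))"
    by (rule mat_delta) (rule sig_in)
  also have "\<dots> = (\<Sum>i\<in>{1..n-1}. e i (sig i)) + e n (sig n)"
  proof -
    obtain k where k: "n = Suc k" using n2 by (cases n) auto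
    show ?thesis unfolding k by (simp add: sum.cl_ivl_Suc)
  qed
  also have "\<dots> = u" unfolding u_def sig_def by (auto intro!: sum.cong)
  finally show ?thesis by simp
qed

end


context ctx
begin

lemma if_mult0: "(if P then x else 0) * (y::complex) = (if P then x * y else 0)" by simp
lemma mult_if0: "(y::complex) * (if P then x else 0) = (if P then y * x else 0)" by simp

definition sinv :: "nat \<Rightarrow> nat" where "sinv i = (if i = 1 then n else i - 1)"

lemma sig_iff: "i \<in> {1..n} \<Longrightarrow> j \<in> {1..n} \<Longrightarrow> (i = sig j) = (j = sinv i)"
  using n2 by (auto simp: sig_def sinv_def)

lemma sinv_in: "i \<in> {1..n} \<Longrightarrow> sinv i \<in> {1..n}" using n2 by (auto simp: sinv_def)

lemma sinv_inj: "i \<in> {1..n} \<Longrightarrow> k \<in> {1..n} \<Longrightarrow> (sinv i = sinv k) = (i = k)"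
  using n2 by (auto simp: sinv_def)

lemma sig_inj: "i \<in> {1..n} \<Longrightarrow> k \<in> {1..n} \<Longrightarrow> (sig i = sig k) = (i = k)"
  using n2 by (auto simp: sig_def)

lemma st_u_mat: "st u = mat (\<lambda>i j. if i = sig j then 1 else 0)"
  unfolding u_mat mat_st by (rule mat_cong) auto

lemma u_unit1: "st u * u = 1"
proof -
  have "st u * u = mat (\<lambda>i k. \<Sum>j\<in>{1..n}. (if i = sig j then 1 else 0) * (if k = sig j then 1 else 0))"
    unfolding mat_mult[symmetric] by (rule arg_cong2[where f="(*)"]) (fact st_u_mat, fact u_mat)
  also have "\<dots> = mat (\<lambda>i j. if i = j then 1 else 0)"
  proof (rule mat_cong)
    fix i k assume i: "i \<in> {1..n}" and k: "k \<in> {1..n}"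
    have "(\<Sum>j\<in>{1..n}. (if i = sig j then 1 else 0) * (if k = sig j then 1 else 0)) =
          (\<Sum>j\<in>{1..n}. if j = sinv i then (if k = i then 1 else 0) else (0::complex))"
      by (rule sum.cong[OF refl]) (use sinv_inj[OF i k] in \<open>auto simp: sig_iff[OF i] sig_iff[OF k]\<close>)
    also have "\<dots> = (if i = k then 1 else 0)" using sinv_in[OF i] by (simp add: sum.delta')
    finally show "(\<Sum>j\<in>{1..n}. (if i = sig j then 1 else 0) * (if k = sig j then 1 else 0)) = (if i = k then 1 else (0::complex))" .
  qed
  finally show ?thesis using mat_one by simp
qed

lemma u_unit2: "u * st u = 1"
proof -
  have "u * st u = mat (\<lambda>i k. \<Sum>j\<in>{1..n}. (if j = sig i then 1 else 0) * (if j = sig k then 1 else 0))"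
    unfolding mat_mult[symmetric] by (rule arg_cong2[where f="(*)"]) (fact u_mat, fact st_u_mat)
  also have "\<dots> = mat (\<lambda>i j. if i = j then 1 else 0)"
  proof (rule mat_cong)
    fix i k assume i: "i \<in> {1..n}" and k: "k \<in> {1..n}"
    have "(\<Sum>j\<in>{1..n}. (if j = sig i then 1 else 0) * (if j = sig k then 1 else 0)) =
          (\<Sum>j\<in>{1..n}. if j = sig i then (if i = k then 1 else 0) else (0::complex))"
      by (rule sum.cong[OF refl]) (auto simp: sig_inj[OF i k])
    also have "\<dots> = (if i = k then 1 else 0)" using sig_in[OF i] by (simp add: sum.delta')
    finally show "(\<Sum>j\<in>{1..n}. (if j = sig i then 1 else 0) * (if j = sig k then 1 else 0)) = (if i = k then 1 else (0::complex))" .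
  qed
  finally show ?thesis using mat_one by simp
qed

definition W :: "complex \<Rightarrow> 'a" where "W z = mat (\<lambda>i j. if i = j then z ^ i else 0)"

lemma W_unit:
  assumes z: "cnj z * z = 1"
  shows "st (W z) * W z = 1" "W z * st (W z) = 1"
proof -
  have zi: "cnj (z ^ i) * z ^ i = 1" "z ^ i * cnj (z ^ i) = 1" for i
    using z by (simp_all add: power_mult_distrib[symmetric] mult.commute)
  have zi': "cnj z ^ i * z ^ i = 1" "z ^ i * cnj z ^ i = 1" for i
    using zi by simp_all
  have "st (W z) * W z = mat (\<lambda>i k. \<Sum>j\<in>{1..n}. (if j = i then cnj (z ^ j) else 0) * (if j = k then z ^ j else 0))"
    unfolding W_def mat_st mat_mult by (rule mat_cong) (auto intro!: sum.cong)
  also have "\<dots> = mat (\<lambda>i j. if i = j then 1 else 0)"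
    by (rule mat_cong) (auto simp: if_mult0 sum.delta zi zi')
  finally show "st (W z) * W z = 1" using mat_one by simp
  have "W z * st (W z) = mat (\<lambda>i k. \<Sum>j\<in>{1..n}. (if i = j then z ^ i else 0) * (if k = j then cnj (z ^ k) else 0))"
    unfolding W_def mat_st mat_mult by (rule mat_cong) (auto intro!: sum.cong)
  also have "\<dots> = mat (\<lambda>i j. if i = j then 1 else 0)"
    by (rule mat_cong) (auto simp: if_mult0 mult_if0 sum.delta zi zi')
  finally show "W z * st (W z) = 1" using mat_one by simp
qed

lemma if_conj0: "(if A \<and> B then x else (0::complex)) = (if A then (if B then x else 0) else 0)" by simp

lemma e_W: assumes k: "k \<in> {1..n}" shows "e k k * W z = W z * e k k"
proof -
  have "e k k * W z = mat (\<lambda>i l. if i = k \<and> l = k then z ^ k else 0)"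
    unfolding e_mat[OF k k] W_def mat_mult
    by (rule mat_cong) (auto simp: if_mult0 mult_if0 if_conj0 sum_if_const sum.delta k)
  moreover have "W z * e k k = mat (\<lambda>i l. if i = k \<and> l = k then z ^ k else 0)"
    unfolding e_mat[OF k k] W_def mat_mult
    by (rule mat_cong) (auto simp: if_mult0 mult_if0 if_conj0 sum_if_const sum.delta k)
  ultimately show ?thesis by simp
qed

lemma u_W: assumes zn: "z ^ n = 1" shows "u * W z = sc z (W z * u)"
proof -
  have "u * W z = mat (\<lambda>i k. if k = sig i then z ^ sig i else 0)"
    unfolding u_mat W_def mat_mult
    by (rule mat_cong) (auto simp: if_mult0 sum.delta sig_in)
  also have "\<dots> = mat (\<lambda>i k. z * (if k = sig i then z ^ i else 0))"
    using zn n2 by (intro mat_cong) (auto simp: sig_def)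
  also have "\<dots> = sc z (W z * u)"
    unfolding u_mat W_def mat_mult mat_sc
    by (rule mat_cong) (auto simp: if_mult0 sum.delta sig_in)
  finally show ?thesis .
qed

end


context ctx
begin

lemma pow_comm_sc:
  assumes "v * w = sc c (w * v)"
  shows "v ^ j * w = sc (c ^ j) (w * v ^ j)"
proof (induction j)
  case 0 then show ?case by simp
next
  case (Suc j)
  have "v ^ Suc j * w = v * (v ^ j * w)" by (simp add: mult.assoc)
  also have "\<dots> = sc (c ^ j) (v * w * v ^ j)" using Suc by (simp add: sc_mr[symmetric] mult.assoc)
  also have "\<dots> = sc (c ^ j) (sc c (w * v * v ^ j))" using assms by (simp add: sc_ml)
  also have "\<dots> = sc (c ^ Suc j) (w * v ^ Suc j)" by (simp add: sc_mult[symmetric] mult.assoc mult.commute)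
  finally show ?case .
qed

lemma key_tr:
  assumes w1: "st w * w = 1" and w2: "w * st w = 1"
    and vw: "v * w = sc c (w * v)" and dw: "d * w = w * d" and cj: "c ^ j \<noteq> 1"
  shows "\<tau> (d * v ^ j) = 0"
proof -
  have vj: "v ^ j * w = sc (c ^ j) (w * v ^ j)" by (rule pow_comm_sc[OF vw])
  have "v ^ j = v ^ j * w * st w" using w2 by (simp add: mult.assoc)
  also have "\<dots> = sc (c ^ j) (w * v ^ j * st w)" using vj by (simp add: sc_ml)
  finally have h: "v ^ j = sc (c ^ j) (w * v ^ j * st w)" .
  have "d * v ^ j = d * sc (c ^ j) (w * v ^ j * st w)" using h by (rule arg_cong)
  then have "d * v ^ j = sc (c ^ j) (d * w * v ^ j * st w)" by (simp add: sc_mr[symmetric] mult.assoc)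
  moreover have "d * w * v ^ j * st w = w * (d * v ^ j * st w)" using dw by (metis mult.assoc)
  ultimately have "\<tau> (d * v ^ j) = \<tau> (sc (c ^ j) (w * (d * v ^ j * st w)))" by simp
  then have "\<tau> (d * v ^ j) = c ^ j * \<tau> (w * (d * v ^ j * st w))" by (simp add: tr_sc)
  also have "\<tau> (w * (d * v ^ j * st w)) = \<tau> (d * v ^ j * (st w * w))"
    by (subst tr_comm) (simp add: mult.assoc)
  finally have "\<tau> (d * v ^ j) = c ^ j * \<tau> (d * v ^ j)" using w1 by simp
  then show ?thesis using cj
    by (metis mult_cancel_right1)
qed

definition F :: "complex \<Rightarrow> 'a set" where "F z = {x. x * W z = W z * x}"

lemma F_good: assumes z: "cnj z * z = 1" shows "goodB sc st (F z)"
proof -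
  note wu = W_unit[OF z]
  have cl: "closed (F z)" unfolding F_def
    by (rule closed_Collect_eq) (intro continuous_intros)+
  have st_ok: "st x \<in> F z" if x: "x \<in> F z" for x
  proof -
    let ?w = "W z"
    have xw: "x * ?w = ?w * x" using x by (simp add: F_def)
    have "st ?w * x = st ?w * x * (?w * st ?w)" using wu by simp
    also have "\<dots> = st ?w * (x * ?w) * st ?w" by (simp add: mult.assoc)
    also have "\<dots> = (st ?w * ?w) * x * st ?w" using xw by (simp add: mult.assoc)
    finally have "st ?w * x = x * st ?w" using wu by simp
    then have "st (st ?w * x) = st (x * st ?w)" by simp
    then show ?thesis by (simp add: st_mult F_def)
  qed
  show ?thesis unfolding goodB_def
  proof (intro conjI ballI allI)
    show "1 \<in> F z" by (simp add: F_def)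
  next
    show "closed (F z)" by (rule cl)
  next
    fix x y assume "x \<in> F z" "y \<in> F z"
    then show "x + y \<in> F z" "x * y \<in> F z"
      by (auto simp: F_def distrib_left distrib_right) (metis mult.assoc)
  next
    fix a x assume "x \<in> F z"
    then show "sc a x \<in> F z" by (simp add: F_def sc_ml[symmetric] sc_mr[symmetric])
  next
    fix x assume "x \<in> F z" then show "st x \<in> F z" by (rule st_ok)
  qed
qed

lemma st_u_W: assumes z: "cnj z * z = 1" and zn: "z ^ n = 1"
  shows "st u * W z = sc (cnj z) (W z * st u)"
proof -
  note wu = W_unit[OF z]
  let ?w = "W z"
  have "st (u * ?w) = st (sc z (?w * u))" using u_W[OF zn] by simp
  then have e1: "st ?w * st u = sc (cnj z) (st u * st ?w)" by (simp add: st_mult st_sc)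
  have "st u * ?w = ?w * (st ?w * st u) * ?w" using wu by (simp add: mult.assoc[symmetric])
  also have "\<dots> = ?w * sc (cnj z) (st u * st ?w) * ?w" using e1 by simp
  also have "\<dots> = sc (cnj z) (?w * st u * (st ?w * ?w))" by (simp add: sc_ml[symmetric] sc_mr[symmetric] mult.assoc)
  finally show ?thesis using wu by simp
qed

lemma F_prop:
  assumes z: "cnj z * z = 1" and zn: "z ^ n = 1" and d: "d \<in> F z"
  shows "z ^ j \<noteq> 1 \<Longrightarrow> \<tau> (d * u ^ j) = 0"
    and "z ^ j \<noteq> 1 \<Longrightarrow> \<tau> (d * st u ^ j) = 0"
proof -
  note wu = W_unit[OF z]
  have dw: "d * W z = W z * d" using d by (simp add: F_def)
  show "z ^ j \<noteq> 1 \<Longrightarrow> \<tau> (d * u ^ j) = 0"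
    by (rule key_tr[OF wu u_W[OF zn] dw])
  show "z ^ j \<noteq> 1 \<Longrightarrow> \<tau> (d * st u ^ j) = 0"
  proof (rule key_tr[OF wu st_u_W[OF z zn] dw])
    assume "z ^ j \<noteq> 1"
    then show "cnj z ^ j \<noteq> 1" by (metis complex_cnj_cnj complex_cnj_one complex_cnj_power)
  qed
qed

definition zeta :: "nat \<Rightarrow> complex" where "zeta l = cis (2 * pi / real l)"

lemma zeta_facts:
  assumes l: "l \<ge> 1" "l dvd n"
  shows "cnj (zeta l) * zeta l = 1" "zeta l ^ n = 1"
    "zeta l ^ l = 1"
    "0 < j \<Longrightarrow> j < l \<Longrightarrow> zeta l ^ j \<noteq> 1"
proof -
  show "cnj (zeta l) * zeta l = 1" by (simp add: zeta_def cis_cnj cis_mult)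
  obtain q where q: "n = l * q" using l by (auto elim: dvdE)
  have "zeta l ^ l = cis (real l * (2 * pi / real l))" unfolding zeta_def by (rule Complex.DeMoivre)
  also have "real l * (2 * pi / real l) = 2 * pi * of_int 1" using l by simp
  finally show zl: "zeta l ^ l = 1" by (simp only: cis_multiple_2pi Ints_of_int)
  show "zeta l ^ n = 1" unfolding q power_mult zl by simp
  assume j: "0 < j" "j < l"
  show "zeta l ^ j \<noteq> 1"
  proof
    assume "zeta l ^ j = 1"
    then have "cis (real j * (2 * pi / real l)) = 1" unfolding zeta_def Complex.DeMoivre .
    then have "cos (real j * (2 * pi / real l)) = 1" by (metis Re_complex_of_real cis.sel(1) one_complex.sel(1))
    then obtain k :: int where k: "real j * (2 * pi / real l) = of_int k * 2 * pi" using cos_one_2pi_int by metis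
    then have "real j / real l = k" using l by (simp add: field_simps)
    moreover have "0 < real j / real l" "real j / real l < 1" using j by auto
    ultimately show False by (metis of_int_0_less_iff of_int_less_1_iff zero_less_imp_eq_int less_le_not_le int_one_le_iff_zero_less linorder_not_le of_int_1_le_iff)
  qed
qed

end


lemma cg_zero: "0 \<in> cstar_gen sc st S" if "cstar_algebra sc st"
proof -
  interpret cst sc st by (rule cst.intro) (rule that)
  have "sc 0 1 \<in> cstar_gen sc st S" by (rule cg_sc[OF cg_one])
  then show ?thesis by simp
qed

lemma (in cst) cg_sum: "(\<And>i. i \<in> A \<Longrightarrow> f i \<in> cstar_gen sc st S) \<Longrightarrow> sum f A \<in> cstar_gen sc st S"
  by (induction A rule: infinite_finite_induct) (auto intro: cg_add cg_zero cstar)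

lemma (in cst) pow_unit: "x * y = (1::'a) \<Longrightarrow> x ^ k * y ^ k = 1"
proof (induction k)
  case (Suc k)
  have "x ^ Suc k * y ^ Suc k = (x * x ^ k) * (y ^ k * y)" using power_Suc[of x k] power_Suc2[of y k] by simp
  also have "\<dots> = x * (x ^ k * y ^ k) * y" by (simp only: mult.assoc)
  finally have "x ^ Suc k * y ^ Suc k = x * (x ^ k * y ^ k) * y" .
  then show ?case using Suc by simp
qed simp

locale ctx2 = ctx sc st \<tau> n e u for sc :: "complex \<Rightarrow> 'a::{real_normed_algebra_1,banach} \<Rightarrow> 'a" and st \<tau> n e u +
  fixes m :: nat and p :: "nat \<Rightarrow> 'a"
  assumes free_pe: "free_family \<tau> {0::nat, 1}
                   (\<lambda>i. if i = 0 then cstar_gen sc st (p ` {1..m})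
                        else cstar_gen sc st {e i j | i j. i \<in> {1..n} \<and> j \<in> {1..n}})"
begin

definition "PP = cstar_gen sc st (p ` {1..m})"
definition "MM = cstar_gen sc st {e i j | i j. i \<in> {1..n} \<and> j \<in> {1..n}}"

lemma e_M: "i \<in> {1..n} \<Longrightarrow> j \<in> {1..n} \<Longrightarrow> e i j \<in> MM"
  unfolding MM_def by (rule cg_sub[THEN subsetD]) blast

lemma u_M: "u \<in> MM"
proof -
  have s: "(\<Sum>i=1..n-1. e i (i+1)) \<in> MM" unfolding MM_def
    by (rule cg_sum, rule e_M[unfolded MM_def]) auto
  have "e n 1 \<in> MM" using n2 by (intro e_M) auto
  then show ?thesis using s unfolding u_def MM_def by (rule cg_add[rotated])
qed

lemma stu_M: "st u \<in> MM" using u_M unfolding MM_def by (rule cg_st)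

lemma uu1: "u ^ k * st u ^ k = 1" by (rule pow_unit[OF u_unit2])
lemma uu2: "st u ^ k * u ^ k = 1" by (rule pow_unit[OF u_unit1])

definition Walt :: "'a list \<Rightarrow> bool" where
  "Walt ys \<longleftrightarrow> odd (length ys) \<and>
     (\<forall>s<length ys. (if even s then ys ! s \<in> PP else ys ! s \<in> MM) \<and> \<tau> (ys ! s) = 0)"

lemma free_list:
  assumes "ys \<noteq> []" "\<forall>s<length ys. (if even s then ys ! s \<in> PP else ys ! s \<in> MM) \<and> \<tau> (ys ! s) = 0"
  shows "\<tau> (prod_list ys) = 0"
proof -
  let ?D = "\<lambda>i::nat. if i = 0 then cstar_gen sc st (p ` {1..m})
                        else cstar_gen sc st {e i j | i j. i \<in> {1..n} \<and> j \<in> {1..n}}"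
  have inst: "length ys \<ge> 1 \<and> (\<forall>s<length ys. idx s \<in> {0::nat,1} \<and> d s \<in> ?D (idx s) \<and> \<tau> (d s) = 0) \<and>
     (\<forall>s. s + 1 < length ys \<longrightarrow> idx s \<noteq> idx (s + 1)) \<longrightarrow> \<tau> (prod_list (map d [0..<length ys])) = 0"
    for idx d using free_pe unfolding free_family_def by blast
  have "\<tau> (prod_list (map (\<lambda>s. ys ! s) [0..<length ys])) = 0"
  proof (rule inst[of "\<lambda>s. if even s then 0 else 1", rule_format], intro conjI allI impI)
    show "1 \<le> length ys" using assms(1) by (cases ys) auto
  next
    fix s assume s: "s < length ys"
    show "(if even s then 0 else 1) \<in> {0::nat, 1}" by simp
    show "\<tau> (ys ! s) = 0" using assms(2) s by blast
    show "ys ! s \<in> ?D (if even s then 0 else 1)"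
      using assms(2) s unfolding PP_def MM_def by (cases "even s") auto
  next
    fix s show "(if even s then 0::nat else 1) \<noteq> (if even (s + 1) then 0 else 1)" by simp
  qed
  then show ?thesis by (simp add: map_nth)
qed

lemma L:
  assumes W: "Walt ys" and Y: "Y \<in> MM"
  shows "\<tau> (prod_list ys * Y) = 0"
proof -
  define Y0 where "Y0 = Y + sc (- \<tau> Y) 1"
  have Y0M: "Y0 \<in> MM" unfolding Y0_def using Y unfolding MM_def by (intro cg_add cg_sc cg_one)
  have tY0: "\<tau> Y0 = 0" unfolding Y0_def by (simp add: tr_add tr_sc tr_one)
  have "\<tau> (prod_list (ys @ [Y0])) = 0"
  proof (rule free_list)
    show "ys @ [Y0] \<noteq> []" by simp
    show "\<forall>s<length (ys @ [Y0]). (if even s then (ys @ [Y0]) ! s \<in> PP else (ys @ [Y0]) ! s \<in> MM) \<and> \<tau> ((ys @ [Y0]) ! s) = 0"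
    proof (intro allI impI)
      fix s assume "s < length (ys @ [Y0])"
      then consider "s < length ys" | "s = length ys" by fastforce
      then show "(if even s then (ys @ [Y0]) ! s \<in> PP else (ys @ [Y0]) ! s \<in> MM) \<and> \<tau> ((ys @ [Y0]) ! s) = 0"
      proof cases
        case 1 then show ?thesis using W by (simp add: Walt_def nth_append)
      next
        case 2 then show ?thesis using W Y0M tY0 by (simp add: Walt_def nth_append)
      qed
    qed
  qed
  then have "\<tau> (prod_list ys * Y0) = 0" by simp
  moreover have "prod_list ys * Y0 = prod_list ys * Y + sc (- \<tau> Y) (prod_list ys)"
    unfolding Y0_def by (simp add: distrib_left sc_mr[symmetric])
  moreover have "\<tau> (prod_list ys) = 0"
    using W by (intro free_list) (auto simp: Walt_def)
  ultimately show ?thesis by (simp add: tr_add tr_sc)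
qed

lemma Walt_single: "x \<in> PP \<Longrightarrow> \<tau> x = 0 \<Longrightarrow> Walt [x]"
  by (simp add: Walt_def)

lemma Walt_snoc:
  assumes W: "Walt ys" and y: "y \<in> MM" "\<tau> y = 0" and x: "x \<in> PP" "\<tau> x = 0"
  shows "Walt (ys @ [y, x])"
  unfolding Walt_def
proof (rule conjI)
  show "odd (length (ys @ [y, x]))" using W by (simp add: Walt_def)
  show "\<forall>s<length (ys @ [y, x]). (if even s then (ys @ [y, x]) ! s \<in> PP else (ys @ [y, x]) ! s \<in> MM) \<and> \<tau> ((ys @ [y, x]) ! s) = 0"
  proof (intro allI impI)
    fix s assume "s < length (ys @ [y, x])"
    then consider "s < length ys" | "s = length ys" | "s = Suc (length ys)" by fastforce
    then show "(if even s then (ys @ [y, x]) ! s \<in> PP else (ys @ [y, x]) ! s \<in> MM) \<and> \<tau> ((ys @ [y, x]) ! s) = 0"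
    proof cases
      case 1 then show ?thesis using W by (simp add: Walt_def nth_append)
    next
      case 2 then show ?thesis using W y by (simp add: Walt_def nth_append)
    next
      case 3 then show ?thesis using W x by (simp add: Walt_def nth_append)
    qed
  qed
qed

definition CG :: "nat \<Rightarrow> 'a set" where
  "CG k = cstar_gen sc st ((\<lambda>j. u ^ k * p j * (st u) ^ k) ` {1..m})"

lemma CG_char:
  assumes x: "x \<in> CG k"
  shows "\<exists>y\<in>PP. x = u ^ k * y * st u ^ k \<and> \<tau> y = \<tau> x"
proof -
  let ?A = "st u ^ k" and ?U = "u ^ k"
  define B where "B = {y. ?A * y * ?U \<in> PP}"
  have PPg: "goodB sc st PP" unfolding PP_def by (rule cg_good)
  have "goodB sc st B" unfolding goodB_def
  proof (intro conjI ballI allI)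
    show "1 \<in> B" unfolding B_def using uu2 PPg by (simp add: goodB_def)
  next
    have "closed ((\<lambda>y. ?A * y * ?U) -` PP)"
      using PPg by (intro continuous_closed_vimage) (auto simp: goodB_def intro!: continuous_intros)
    then show "closed B" unfolding B_def by (simp add: vimage_def)
  next
    fix x y assume "x \<in> B" "y \<in> B"
    then have a: "?A * x * ?U \<in> PP" "?A * y * ?U \<in> PP" by (auto simp: B_def)
    have "?A * (x + y) * ?U = ?A * x * ?U + ?A * y * ?U" by (simp add: distrib_left distrib_right)
    then show "x + y \<in> B" using a PPg by (simp add: B_def goodB_def)
    have "?A * (x * y) * ?U = (?A * x * ?U) * (?A * y * ?U)"
    proof -
      have "(?A * x * ?U) * (?A * y * ?U) = ?A * x * (?U * ?A) * y * ?U" by (simp add: mult.assoc)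
      then show ?thesis using uu1 by (simp add: mult.assoc)
    qed
    then show "x * y \<in> B" using a PPg by (simp add: B_def goodB_def)
  next
    fix a x assume "x \<in> B"
    then have a: "?A * x * ?U \<in> PP" by (auto simp: B_def)
    have "?A * sc a x * ?U = sc a (?A * x * ?U)" by (simp add: sc_ml[symmetric] sc_mr[symmetric])
    then show "sc a x \<in> B" using a PPg by (simp add: B_def goodB_def)
  next
    fix x assume "x \<in> B"
    then have a: "?A * x * ?U \<in> PP" by (auto simp: B_def)
    have "st (?A * x * ?U) = ?A * st x * ?U" by (simp add: st_mult st_pow mult.assoc)
    then show "st x \<in> B" using a PPg by (metis (mono_tags, lifting) B_def goodB_def mem_Collect_eq)
  qed
  moreover have "(\<lambda>j. u ^ k * p j * (st u) ^ k) ` {1..m} \<subseteq> B"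
  proof
    fix z assume "z \<in> (\<lambda>j. u ^ k * p j * (st u) ^ k) ` {1..m}"
    then obtain j where j: "j \<in> {1..m}" "z = u ^ k * p j * (st u) ^ k" by auto
    have "?A * z * ?U = (?A * ?U) * p j * (?A * ?U)" unfolding j by (simp add: mult.assoc)
    then have "?A * z * ?U = p j" using uu2 by simp
    then show "z \<in> B" unfolding B_def PP_def using j by (auto intro: cg_sub[THEN subsetD])
  qed
  ultimately have "CG k \<subseteq> B" unfolding CG_def by (rule cg_min[rotated])
  then have yP: "?A * x * ?U \<in> PP" using x by (auto simp: B_def)
  have "?U * (?A * x * ?U) * ?A = (?U * ?A) * x * (?U * ?A)" by (simp add: mult.assoc)
  then have e1: "x = ?U * (?A * x * ?U) * ?A" using uu1 by simp
  have "\<tau> (?A * x * ?U) = \<tau> (x * ?U * ?A)" by (subst tr_comm) (simp add: mult.assoc)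
  then have e2: "\<tau> (?A * x * ?U) = \<tau> x" using uu1 by (simp add: mult.assoc)
  show ?thesis using yP e1 e2 by blast
qed

lemma trprop:
  assumes dprop: "\<And>d j. d \<in> Dl \<Longrightarrow> 0 < j \<Longrightarrow> j < l \<Longrightarrow> \<tau> (d * u ^ j) = 0 \<and> \<tau> (d * st u ^ j) = 0"
    and d: "d \<in> Dl" and k: "k < l" "k' < l" and c: "k \<noteq> k' \<or> \<tau> d = 0"
  shows "\<tau> (st u ^ k * d * u ^ k') = 0"
proof -
  have "\<tau> (st u ^ k * d * u ^ k') = \<tau> (d * (u ^ k' * st u ^ k))"
    by (simp add: mult.assoc tr_comm[of "st u ^ k"])
  also have "\<dots> = 0"
  proof (cases "k \<le> k'")
    case True
    have "u ^ k' = u ^ (k' - k) * u ^ k" using True by (metis le_add_diff_inverse2 power_add)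
    then have "u ^ k' * st u ^ k = u ^ (k' - k) * (u ^ k * st u ^ k)" by (simp add: mult.assoc)
    then have e: "u ^ k' * st u ^ k = u ^ (k' - k)" using uu1 by simp
    show ?thesis
    proof (cases "k = k'")
      case True then show ?thesis using c e by simp
    next
      case False then show ?thesis using e dprop[OF d, of "k' - k"] k \<open>k \<le> k'\<close> by simp
    qed
  next
    case False
    have "st u ^ k = st u ^ k' * st u ^ (k - k')" using False
      by (metis le_add_diff_inverse nat_le_linear power_add)
    then have "u ^ k' * st u ^ k = (u ^ k' * st u ^ k') * st u ^ (k - k')" by (simp add: mult.assoc)
    then have e: "u ^ k' * st u ^ k = st u ^ (k - k')" using uu1 by simp
    show ?thesis using e dprop[OF d, of "k - k'"] k False by simp
  qed
  finally show ?thesis .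
qed

lemma main_gen:
  fixes l :: nat
  assumes DlM: "Dl \<subseteq> MM" and one_Dl: "1 \<in> Dl"
    and dprop: "\<And>d j. d \<in> Dl \<Longrightarrow> 0 < j \<Longrightarrow> j < l \<Longrightarrow> \<tau> (d * u ^ j) = 0 \<and> \<tau> (d * st u ^ j) = 0"
    and r1: "r \<ge> 1"
    and hyp: "\<forall>s<r. idx s \<in> {0..l} \<and> d s \<in> (if idx s < l then CG (idx s) else Dl) \<and> \<tau> (d s) = 0"
    and alt: "\<forall>s. s + 1 < r \<longrightarrow> idx s \<noteq> idx (s + 1)"
    and r': "r' < l"
  shows "\<tau> (prod_list (map d [0..<r]) * u ^ r') = 0"
proof -
  have uk_M: "u ^ k \<in> MM" for k using u_M unfolding MM_def by (rule cg_pow)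
  have suk_M: "st u ^ k \<in> MM" for k using stu_M unfolding MM_def by (rule cg_pow)
  have Mmul: "x \<in> MM \<Longrightarrow> y \<in> MM \<Longrightarrow> x * y \<in> MM" for x y unfolding MM_def by (rule cg_mult)
  have tr1: "\<tau> (st u ^ k * u ^ k') = 0" if "k < l" "k' < l" "k \<noteq> k'" for k k'
    using trprop[OF dprop one_Dl that(1,2) disjI1[OF that(3)]] by simp
  have PC: "\<exists>y\<in>PP. d s = u ^ idx s * y * st u ^ idx s \<and> \<tau> y = 0" if "s < r" "idx s < l" for s
    using CG_char[of "d s" "idx s"] hyp that by auto
  have DL: "d s \<in> Dl" "\<tau> (d s) = 0" if "s < r" "\<not> idx s < l" for s
    using hyp that by auto
  have idxl: "idx s \<le> l" if "s < r" for s using hyp that by auto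
  define Inv where "Inv t \<longleftrightarrow>
    (let z = prod_list (map d [0..<Suc t]) in
     (idx t < l \<longrightarrow> (\<exists>Y0\<in>MM. \<exists>ys. Walt ys \<and> z = Y0 * prod_list ys * st u ^ idx t)) \<and>
     (\<not> idx t < l \<longrightarrow> (t = 0 \<and> z = d t) \<or>
        (\<exists>Y0\<in>MM. \<exists>ys. Walt ys \<and> (\<exists>k<l. z = Y0 * prod_list ys * st u ^ k * d t))))" for t
  have inv: "Inv t" if "t < r" for t
    using that
  proof (induction t)
    case 0
    show ?case
    proof (cases "idx 0 < l")
      case True
      obtain y where y: "y \<in> PP" "d 0 = u ^ idx 0 * y * st u ^ idx 0" "\<tau> y = 0" using PC[OF 0 True] by blast
      have "\<exists>Y0\<in>MM. \<exists>ys. Walt ys \<and> d 0 = Y0 * prod_list ys * st u ^ idx 0"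
        using Walt_single[OF y(1,3)] uk_M y by (intro bexI[where x="u ^ idx 0"] exI[where x="[y]"]) auto
      then show ?thesis unfolding Inv_def Let_def using True by auto
    next
      case False then show ?thesis unfolding Inv_def by simp
    qed
  next
    case (Suc t)
    then have IH: "Inv t" and t: "Suc t < r" by auto
    have zS: "prod_list (map d [0..<Suc (Suc t)]) = prod_list (map d [0..<Suc t]) * d (Suc t)" by (simp add: mult.assoc)
    have neq: "idx t \<noteq> idx (Suc t)" using alt t by auto
    show ?case
    proof (cases "idx (Suc t) < l")
      case True
      obtain x where x: "x \<in> PP" "d (Suc t) = u ^ idx (Suc t) * x * st u ^ idx (Suc t)" "\<tau> x = 0"
        using PC[OF t True] by blast
      show ?thesis
      proof (cases "idx t < l")
        case True2: True
        from IH True2 obtain Y0 ys where Y0: "Y0 \<in> MM" "Walt ys"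
          "prod_list (map d [0..<Suc t]) = Y0 * prod_list ys * st u ^ idx t"
          unfolding Inv_def Let_def by auto
        let ?y = "st u ^ idx t * u ^ idx (Suc t)"
        have yM: "?y \<in> MM" by (intro Mmul uk_M suk_M)
        have ty: "\<tau> ?y = 0" using tr1 True True2 neq by simp
        have "prod_list (map d [0..<Suc (Suc t)]) = Y0 * prod_list (ys @ [?y, x]) * st u ^ idx (Suc t)"
          unfolding zS Y0(3) x(2) by (simp add: mult.assoc)
        then show ?thesis unfolding Inv_def Let_def using True Y0 Walt_snoc[OF Y0(2) yM ty x(1,3)] by blast
      next
        case False2: False
        have dt: "d t \<in> Dl" "\<tau> (d t) = 0" using DL[OF _ False2] t by auto
        from IH False2 consider (a) "t = 0" "prod_list (map d [0..<Suc t]) = d t"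
          | (b) Y0 ys k where "Y0 \<in> MM" "Walt ys" "k < l" "prod_list (map d [0..<Suc t]) = Y0 * prod_list ys * st u ^ k * d t"
          unfolding Inv_def Let_def by auto
        then show ?thesis
        proof cases
          case a
          have "prod_list (map d [0..<Suc (Suc t)]) = (d t * u ^ idx (Suc t)) * prod_list [x] * st u ^ idx (Suc t)"
            unfolding zS a(2) x(2) by (simp add: mult.assoc)
          moreover have "d t * u ^ idx (Suc t) \<in> MM" using dt DlM by (intro Mmul uk_M) auto
          ultimately show ?thesis unfolding Inv_def Let_def using True Walt_single[OF x(1,3)] by blast
        next
          case b
          let ?y = "st u ^ k * d t * u ^ idx (Suc t)"
          have yM: "?y \<in> MM" using dt DlM by (intro Mmul uk_M suk_M) auto
          have ty: "\<tau> ?y = 0" using trprop[OF dprop dt(1) b(3) True] dt by simp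
          have "prod_list (map d [0..<Suc (Suc t)]) = Y0 * prod_list (ys @ [?y, x]) * st u ^ idx (Suc t)"
            unfolding zS b(4) x(2) by (simp add: mult.assoc)
          then show ?thesis unfolding Inv_def Let_def using True b Walt_snoc[OF b(2) yM ty x(1,3)] by blast
        qed
      qed
    next
      case False
      have True2: "idx t < l" using neq idxl[of t] idxl[of "Suc t"] t False by auto
      from IH True2 obtain Y0 ys where Y0: "Y0 \<in> MM" "Walt ys"
        "prod_list (map d [0..<Suc t]) = Y0 * prod_list ys * st u ^ idx t"
        unfolding Inv_def Let_def by auto
      have "prod_list (map d [0..<Suc (Suc t)]) = Y0 * prod_list ys * st u ^ idx t * d (Suc t)"
        unfolding zS Y0(3) by simp
      then show ?thesis unfolding Inv_def Let_def using False Y0 True2 by blast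
    qed
  qed
  obtain t where tr: "r = Suc t" using r1 by (cases r) auto
  have It: "Inv t" using inv tr by simp
  show ?thesis
  proof (cases "idx t < l")
    case True
    from It True obtain Y0 ys where Y0: "Y0 \<in> MM" "Walt ys"
      "prod_list (map d [0..<r]) = Y0 * prod_list ys * st u ^ idx t"
      unfolding Inv_def Let_def tr by auto
    have "\<tau> (prod_list (map d [0..<r]) * u ^ r') = \<tau> (Y0 * (prod_list ys * (st u ^ idx t * u ^ r')))"
      unfolding Y0(3) by (simp add: mult.assoc)
    also have "\<dots> = \<tau> (prod_list ys * (st u ^ idx t * u ^ r' * Y0))"
      by (subst tr_comm) (simp add: mult.assoc)
    also have "\<dots> = 0" using Y0 by (intro L Mmul uk_M suk_M)
    finally show ?thesis .
  next
    case False
    have dt: "d t \<in> Dl" "\<tau> (d t) = 0" using DL[OF _ False] tr by auto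
    from It False consider (a) "prod_list (map d [0..<r]) = d t"
      | (b) Y0 ys k where "Y0 \<in> MM" "Walt ys" "k < l" "prod_list (map d [0..<r]) = Y0 * prod_list ys * st u ^ k * d t"
      unfolding Inv_def Let_def tr by auto
    then show ?thesis
    proof cases
      case a
      show ?thesis
      proof (cases "r' = 0")
        case True then show ?thesis using a dt by simp
      next
        case False then show ?thesis using a dprop[OF dt(1), of r'] r' by simp
      qed
    next
      case b
      have "\<tau> (prod_list (map d [0..<r]) * u ^ r') = \<tau> (Y0 * (prod_list ys * (st u ^ k * d t * u ^ r')))"
        unfolding b(4) by (simp add: mult.assoc)
      also have "\<dots> = \<tau> (prod_list ys * (st u ^ k * d t * u ^ r' * Y0))"
        by (subst tr_comm) (simp add: mult.assoc)
      also have "\<dots> = 0" using b dt DlM by (intro L Mmul uk_M suk_M) auto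
      finally show ?thesis .
    qed
  qed
qed


lemma dprop_root:
  assumes l: "1 \<le> l" "l dvd n" and S: "S \<subseteq> F (zeta l)" and d: "d \<in> cstar_gen sc st S"
    and j: "0 < j" "j < l"
  shows "\<tau> (d * u ^ j) = 0 \<and> \<tau> (d * st u ^ j) = 0"
proof -
  note zf = zeta_facts[OF l]
  have "cstar_gen sc st S \<subseteq> F (zeta l)" by (rule cg_min[OF S F_good[OF zf(1)]])
  then have dF: "d \<in> F (zeta l)" using d by auto
  show ?thesis using F_prop[OF zf(1) zf(2) dF] zf(4)[OF j] by simp
qed

lemma ul_F: assumes l: "1 \<le> l" "l dvd n" shows "u ^ (l * t) \<in> F (zeta l)"
proof -
  note zf = zeta_facts[OF l]
  have "u ^ (l * t) * W (zeta l) = sc (zeta l ^ (l * t)) (W (zeta l) * u ^ (l * t))"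
    by (rule pow_comm_sc[OF u_W[OF zf(2)]])
  also have "zeta l ^ (l * t) = 1" by (simp add: power_mult zf(3))
  finally show ?thesis by (simp add: F_def)
qed

lemma e_F: "i \<in> {1..n} \<Longrightarrow> e i i \<in> F z"
  using e_W by (simp add: F_def)

lemma final_gen:
  assumes DlM: "Dl \<subseteq> MM" and one_Dl: "1 \<in> Dl"
    and dprop: "\<And>d j. d \<in> Dl \<Longrightarrow> 0 < j \<Longrightarrow> j < l \<Longrightarrow> \<tau> (d * u ^ j) = 0 \<and> \<tau> (d * st u ^ j) = 0"
    and l1: "1 \<le> l"
    and D: "D = (\<lambda>k. if k < l then cstar_gen sc st ((\<lambda>j. u ^ k * p j * (st u) ^ k) ` {1..m}) else Dl)"
  shows "free_family \<tau> {0..l} D \<and> (\<forall>\<omega>\<in>Lambda0 \<tau> {0..l} D. \<forall>r<l. \<tau> (\<omega> * u ^ r) = 0)"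
proof
  have D': "D = (\<lambda>k. if k < l then CG k else Dl)" unfolding D CG_def by simp
  show "free_family \<tau> {0..l} D" unfolding free_family_def
  proof (intro allI impI)
    fix r :: nat and idx :: "nat \<Rightarrow> nat" and d
    assume a: "1 \<le> r \<and> (\<forall>s<r. idx s \<in> {0..l} \<and> d s \<in> D (idx s) \<and> \<tau> (d s) = 0) \<and> (\<forall>s. s + 1 < r \<longrightarrow> idx s \<noteq> idx (s + 1))"
    have "\<tau> (prod_list (map d [0..<r]) * u ^ 0) = 0"
      using a l1 by (intro main_gen[OF DlM one_Dl dprop, where idx=idx]) (auto simp: D')
    then show "\<tau> (prod_list (map d [0..<r])) = 0" by simp
  qed
  show "\<forall>\<omega>\<in>Lambda0 \<tau> {0..l} D. \<forall>r<l. \<tau> (\<omega> * u ^ r) = 0"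
  proof (intro ballI allI impI)
    fix \<omega> r' assume w: "\<omega> \<in> Lambda0 \<tau> {0..l} D" and r': "r' < l"
    from w obtain r idx d where a: "\<omega> = prod_list (map d [0..<r])" "1 \<le> r"
      "\<forall>s<r. idx s \<in> {0..l} \<and> d s \<in> D (idx s) \<and> \<tau> (d s) = 0" "\<forall>s. s + 1 < r \<longrightarrow> idx s \<noteq> idx (s + 1)"
      unfolding Lambda0_def by blast
    show "\<tau> (\<omega> * u ^ r') = 0"
      unfolding a(1) using a r' by (intro main_gen[OF DlM one_Dl dprop, where idx=idx]) (auto simp: D')
  qed
qed

end

theorem lemma3p1:
  fixes sc :: "complex \<Rightarrow> 'a::{real_normed_algebra_1,banach} \<Rightarrow> 'a"
    and st :: "'a \<Rightarrow> 'a"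
    and \<tau> :: "'a \<Rightarrow> complex"
    and n m :: nat
    and \<alpha> :: "nat \<Rightarrow> real"
    and p :: "nat \<Rightarrow> 'a"
    and e :: "nat \<Rightarrow> nat \<Rightarrow> 'a"
    and u :: 'a
  assumes cstar: "cstar_algebra sc st"
    and state: "faithful_tracial_state sc st \<tau>"
    and n2: "n \<ge> 2" and m1: "m \<ge> 1"
    and alpha_pos: "\<forall>j\<in>{1..m}. \<alpha> j > 0"
    and alpha_mono: "\<forall>j k. 1 \<le> j \<longrightarrow> j \<le> k \<longrightarrow> k \<le> m \<longrightarrow> \<alpha> j \<le> \<alpha> k"
    and alpha_sum: "(\<Sum>j=1..m. \<alpha> j) = 1"
    and p_proj: "\<forall>j\<in>{1..m}. st (p j) = p j \<and> p j * p j = p j"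
    and p_orth: "\<forall>j\<in>{1..m}. \<forall>k\<in>{1..m}. j \<noteq> k \<longrightarrow> p j * p k = 0"
    and p_sum: "(\<Sum>j=1..m. p j) = 1"
    and p_trace: "\<forall>j\<in>{1..m}. \<tau> (p j) = complex_of_real (\<alpha> j)"
    and e_mult: "\<forall>i\<in>{1..n}. \<forall>j\<in>{1..n}. \<forall>k\<in>{1..n}. \<forall>l\<in>{1..n}.
                   e i j * e k l = (if j = k then e i l else 0)"
    and e_star: "\<forall>i\<in>{1..n}. \<forall>j\<in>{1..n}. st (e i j) = e j i"
    and e_sum: "(\<Sum>i=1..n. e i i) = 1"
    and e_trace: "\<forall>i\<in>{1..n}. \<forall>j\<in>{1..n}.
                   \<tau> (e i j) = (if i = j then 1 / of_nat n else 0)"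
    and free_pe: "free_family \<tau> {0::nat, 1}
                   (\<lambda>i. if i = 0 then cstar_gen sc st (p ` {1..m})
                        else cstar_gen sc st {e i j | i j. i \<in> {1..n} \<and> j \<in> {1..n}})"
    and u_def: "u = (\<Sum>i=1..n-1. e i (i+1)) + e n 1"
  shows
   "(let D = (\<lambda>k. if k < n then cstar_gen sc st ((\<lambda>j. u ^ k * p j * (st u) ^ k) ` {1..m})
                  else cstar_gen sc st ((\<lambda>i. e i i) ` {1..n}))
     in free_family \<tau> {0..n} D \<and>
        (\<forall>\<omega>\<in>Lambda0 \<tau> {0..n} D. \<forall>r<n. \<tau> (\<omega> * u ^ r) = 0)) \<and>
    (\<forall>l::nat. l dvd n \<and> 1 < l \<and> l < n \<longrightarrow>
      (let D = (\<lambda>k. if k < l then cstar_gen sc st ((\<lambda>j. u ^ k * p j * (st u) ^ k) ` {1..m})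
                   else cstar_gen sc st ((\<lambda>i. e i i) ` {1..n} \<union>
                                          (\<lambda>t. u ^ (l * t)) ` {1..n div l - 1}))
       in free_family \<tau> {0..l} D \<and>
          (\<forall>\<omega>\<in>Lambda0 \<tau> {0..l} D. \<forall>r<l. \<tau> (\<omega> * u ^ r) = 0)))"
proof -
  interpret ctx2 sc st \<tau> n e u m p
    by unfold_locales (fact assms)+
  have part1: "let D = (\<lambda>k. if k < n then cstar_gen sc st ((\<lambda>j. u ^ k * p j * (st u) ^ k) ` {1..m})
                  else cstar_gen sc st ((\<lambda>i. e i i) ` {1..n}))
     in free_family \<tau> {0..n} D \<and>
        (\<forall>\<omega>\<in>Lambda0 \<tau> {0..n} D. \<forall>r<n. \<tau> (\<omega> * u ^ r) = 0)"
    unfolding Let_def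
  proof (rule final_gen)
    show "cstar_gen sc st ((\<lambda>i. e i i) ` {1..n}) \<subseteq> MM"
    proof -
      have "(\<lambda>i. e i i) ` {1..n} \<subseteq> MM" using e_M by auto
      then show ?thesis unfolding MM_def by (rule cg_mono)
    qed
    show "1 \<in> cstar_gen sc st ((\<lambda>i. e i i) ` {1..n})" by (rule cg_one)
    show "1 \<le> n" using n2 by simp
    fix d j assume "d \<in> cstar_gen sc st ((\<lambda>i. e i i) ` {1..n})" "0 < j" "j < n"
    then show "\<tau> (d * u ^ j) = 0 \<and> \<tau> (d * st u ^ j) = 0"
      using n2 by (intro dprop_root[where S="(\<lambda>i. e i i) ` {1..n}"]) (auto intro: e_F)
  qed simp
  have part2: "let D = (\<lambda>k. if k < l then cstar_gen sc st ((\<lambda>j. u ^ k * p j * (st u) ^ k) ` {1..m})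
                   else cstar_gen sc st ((\<lambda>i. e i i) ` {1..n} \<union>
                                          (\<lambda>t. u ^ (l * t)) ` {1..n div l - 1}))
       in free_family \<tau> {0..l} D \<and>
          (\<forall>\<omega>\<in>Lambda0 \<tau> {0..l} D. \<forall>r<l. \<tau> (\<omega> * u ^ r) = 0)"
    if l: "l dvd n" "1 < l" "l < n" for l
    unfolding Let_def
  proof (rule final_gen)
    let ?S = "(\<lambda>i. e i i) ` {1..n} \<union> (\<lambda>t. u ^ (l * t)) ` {1..n div l - 1}"
    have uM: "u ^ k \<in> MM" for k using u_M unfolding MM_def by (rule cg_pow)
    show "cstar_gen sc st ?S \<subseteq> MM"
    proof -
      have "?S \<subseteq> MM" using e_M uM by auto
      then show ?thesis unfolding MM_def by (rule cg_mono)
    qed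
    show "1 \<in> cstar_gen sc st ?S" by (rule cg_one)
    show "1 \<le> l" using l by simp
    fix d j assume "d \<in> cstar_gen sc st ?S" "0 < j" "j < l"
    then show "\<tau> (d * u ^ j) = 0 \<and> \<tau> (d * st u ^ j) = 0"
      using l by (intro dprop_root[where S="?S"]) (auto intro: e_F ul_F)
  qed simp
  show ?thesis using part1 part2 by blast
qed

end
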